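(* Let $A\in\mathbb{R}^{n\times n}$, let $\lambda\in\mathbb{R}$, and let $v\in\mathbb{R}^{n\times1}$ and $u\in\mathbb{R}^{1\times n}$ satisfy $Av=\lambda v$, $uA=\lambda u$ and $uv=1$. Then for every row vector $u'\in\mathbb{R}^{1\times n}$ with $u'v=1$, the matrix $\lambda vu'+(I-vu')A$ is conjugate (similar) to $A$, and for every integer $k\ge 0$, \[\bigl(\lambda vu'+(I-vu')A\bigr)^k=\lambda^k vu'+(I-vu')A^k,\] where $I$ is the $n\times n$ identity matrix. *)

theory Defs
  imports "Jordan_Normal_Form.Matrix"
begin

end

theory Submission
  imports Defs
begin
lemma core:
 fixes M P Q :: "real mat"
 assumes M: "M \<in> carrier_mat n n" and P: "P \<in> carrier_mat n n" and Q: "Q \<in> carrier_mat n n"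
  and PP: "P*P=P" and QQ: "Q*Q=Q" and PQ: "P*Q = Q" and QP: "Q*P = P"
  and MP: "M*P = c \<cdot>\<^sub>m P" and MQ: "M*Q = c \<cdot>\<^sub>m Q" and QM: "Q*M = c \<cdot>\<^sub>m Q"
 shows "(1\<^sub>m n - P + Q) * (1\<^sub>m n + P - Q) = 1\<^sub>m n"
   "(1\<^sub>m n + P - Q) * (1\<^sub>m n - P + Q) = 1\<^sub>m n"
   "(1\<^sub>m n - P + Q) * M * (1\<^sub>m n + P - Q) = c \<cdot>\<^sub>m P + (1\<^sub>m n - P) * M"
proof -
  let ?C = "carrier_mat n n"
  have mc: "X * Y \<in> ?C" if "X \<in> ?C" "Y \<in> ?C" for X Y :: "real mat" using that by simp
  have d1: "(X + Y) * Z = X * Z + Y * Z" if "X \<in> ?C" "Y \<in> ?C" "Z \<in> ?C" for X Y Z :: "real mat"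
    using add_mult_distrib_mat that by blast
  have d2: "Z * (X + Y) = Z * X + Z * Y" if "X \<in> ?C" "Y \<in> ?C" "Z \<in> ?C" for X Y Z :: "real mat"
    using mult_add_distrib_mat that by blast
  have d3: "(X - Y) * Z = X * Z - Y * Z" if "X \<in> ?C" "Y \<in> ?C" "Z \<in> ?C" for X Y Z :: "real mat"
    using minus_mult_distrib_mat that by blast
  have d4: "Z * (X - Y) = Z * X - Z * Y" if "X \<in> ?C" "Y \<in> ?C" "Z \<in> ?C" for X Y Z :: "real mat"
    using mult_minus_distrib_mat that by blast
  have as: "X * Y * Z = X * (Y * Z)" if "X \<in> ?C" "Y \<in> ?C" "Z \<in> ?C" for X Y Z :: "real mat"
    using assoc_mult_mat that by blast
  have sm: "X * (k \<cdot>\<^sub>m Y) = k \<cdot>\<^sub>m (X * Y)" "(k \<cdot>\<^sub>m Y) * X = k \<cdot>\<^sub>m (Y * X)"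
    if "X \<in> ?C" "Y \<in> ?C" for X Y :: "real mat" and k :: real
    using mult_smult_distrib mult_smult_assoc_mat that by blast+
  have PM: "P * (M * P) = c \<cdot>\<^sub>m P" "P * (M * Q) = c \<cdot>\<^sub>m Q" "Q * (M * P) = c \<cdot>\<^sub>m P" "Q * (M * Q) = c \<cdot>\<^sub>m Q"
    using sm PP PQ QP QQ MP MQ QM M P Q by auto
  have QMX: "Q * (M * X) = c \<cdot>\<^sub>m (Q * X)" if "X \<in> ?C" for X
    using sm that QM as[of Q M X] M P Q by auto
  have one: "1\<^sub>m n * X = X" "X * 1\<^sub>m n = X" if "X \<in> ?C" for X :: "real mat"
    using that by auto
  note simps = one mc d1 d2 d3 d4 as sm minus_carrier_mat M P Q PP QQ PQ QP MP MQ QM PM QMX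
  show "(1\<^sub>m n - P + Q) * (1\<^sub>m n + P - Q) = 1\<^sub>m n"
    apply (simp add: simps)
    apply (rule eq_matI) using M P Q apply (auto simp: minus_carrier_mat)
    done
  show "(1\<^sub>m n + P - Q) * (1\<^sub>m n - P + Q) = 1\<^sub>m n"
    apply (simp add: simps)
    apply (rule eq_matI) using M P Q apply (auto simp: minus_carrier_mat)
    done
  show "(1\<^sub>m n - P + Q) * M * (1\<^sub>m n + P - Q) = c \<cdot>\<^sub>m P + (1\<^sub>m n - P) * M"
    apply (simp add: simps)
    apply (rule eq_matI) using M P Q apply (auto simp: minus_carrier_mat)
    done
qed

theorem lemma4p3:
  fixes A :: "real mat" and v u :: "real mat" and lam :: real and n :: nat
  assumes A: "A \<in> carrier_mat n n"
    and v: "v \<in> carrier_mat n 1"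
    and u: "u \<in> carrier_mat 1 n"
    and Av: "A * v = lam \<cdot>\<^sub>m v"
    and uA: "u * A = lam \<cdot>\<^sub>m u"
    and uv: "u * v = 1\<^sub>m 1"
  shows "\<forall>u' \<in> carrier_mat 1 n. u' * v = 1\<^sub>m 1 \<longrightarrow>
           similar_mat (lam \<cdot>\<^sub>m (v * u') + (1\<^sub>m n - v * u') * A) A \<and>
           (\<forall>k::nat. (lam \<cdot>\<^sub>m (v * u') + (1\<^sub>m n - v * u') * A) ^\<^sub>m k
                      = lam ^ k \<cdot>\<^sub>m (v * u') + (1\<^sub>m n - v * u') * (A ^\<^sub>m k))"
proof (intro ballI impI)
  fix u' assume u': "u' \<in> carrier_mat 1 n" and u'v: "u' * v = 1\<^sub>m 1"
  have Akv: "A ^\<^sub>m k * v = lam ^ k \<cdot>\<^sub>m v" for k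
  proof (induction k)
    case 0 then show ?case using A v by auto
  next
    case (Suc k)
    have "A ^\<^sub>m Suc k * v = A ^\<^sub>m k * (A * v)" using A v by (simp add: assoc_mult_mat[of _ n n _ n _ 1])
    also have "\<dots> = lam \<cdot>\<^sub>m (A ^\<^sub>m k * v)" unfolding Av using A v by (simp add: mult_smult_distrib[of _ n n _ 1])
    also have "\<dots> = lam ^ Suc k \<cdot>\<^sub>m v" unfolding Suc by (rule eq_matI) auto
    finally show ?case .
  qed
  have uAk: "u * A ^\<^sub>m k = lam ^ k \<cdot>\<^sub>m u" for k
  proof (induction k)
    case 0 then show ?case using A u by auto
  next
    case (Suc k)
    have "u * A ^\<^sub>m Suc k = (u * A ^\<^sub>m k) * A" using A u by (simp add: assoc_mult_mat[of _ 1 n _ n _ n])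
    also have "\<dots> = lam ^ k \<cdot>\<^sub>m (u * A)" unfolding Suc using A u by (simp add: mult_smult_assoc_mat[of _ 1 n _ n])
    also have "\<dots> = lam ^ Suc k \<cdot>\<^sub>m u" unfolding uA by (rule eq_matI) auto
    finally show ?case .
  qed
  define P where "P = v * u'"
  define Q where "Q = v * u"
  have P: "P \<in> carrier_mat n n" and Q: "Q \<in> carrier_mat n n" unfolding P_def Q_def using v u u' by auto
  have gen: "P * P = P \<and> Q * Q = Q \<and> P * Q = Q \<and> Q * P = P" 
  proof -
    have "X * Y * (v * Z) = v * Z" if "X \<in> carrier_mat n 1" "X = v" "Y * v = 1\<^sub>m 1" "Y \<in> carrier_mat 1 n" "Z \<in> carrier_mat 1 n"
      for X Y Z
    proof -
      have "X * Y * (v * Z) = X * (Y * (v * Z))" using that v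
        by (intro assoc_mult_mat[of _ n 1 _ n _ n]) auto
      also have "Y * (v * Z) = Y * v * Z" using that v
        by (intro assoc_mult_mat[of _ 1 n _ 1 _ n, symmetric]) auto
      finally have "X * Y * (v * Z) = X * (Y * v * Z)" .
      then show ?thesis using that by simp
    qed
    then show ?thesis unfolding P_def Q_def using v u u' uv u'v by metis
  qed
  have prem: "M * P = c \<cdot>\<^sub>m P \<and> M * Q = c \<cdot>\<^sub>m Q \<and> Q * M = c \<cdot>\<^sub>m Q"
    if M: "M \<in> carrier_mat n n" "M * v = c \<cdot>\<^sub>m v" "u * M = c \<cdot>\<^sub>m u" for M c
  proof (intro conjI)
    show "M * P = c \<cdot>\<^sub>m P" unfolding P_def using M v u'
      by (simp add: assoc_mult_mat[symmetric, of _ n n _ 1 _ n] mult_smult_assoc_mat[of _ n 1 _ n])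
    show "M * Q = c \<cdot>\<^sub>m Q" unfolding Q_def using M v u
      by (simp add: assoc_mult_mat[symmetric, of _ n n _ 1 _ n] mult_smult_assoc_mat[of _ n 1 _ n])
    show "Q * M = c \<cdot>\<^sub>m Q" unfolding Q_def using M v u
      by (simp add: assoc_mult_mat[of _ n 1 _ n _ n] mult_smult_distrib[of _ n 1 _ n])
  qed
  have core_app: "(1\<^sub>m n - P + Q) * M * (1\<^sub>m n + P - Q) = c \<cdot>\<^sub>m P + (1\<^sub>m n - P) * M"
    if M: "M \<in> carrier_mat n n" "M * v = c \<cdot>\<^sub>m v" "u * M = c \<cdot>\<^sub>m u" for M c
    using core(3)[OF M(1) P Q] gen prem[OF M] by blast
  have ST: "(1\<^sub>m n - P + Q) * (1\<^sub>m n + P - Q) = 1\<^sub>m n" "(1\<^sub>m n + P - Q) * (1\<^sub>m n - P + Q) = 1\<^sub>m n"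
    using core(1,2)[OF A P Q] gen prem[OF A Av uA] by blast+
  define B where "B = lam \<cdot>\<^sub>m (v * u') + (1\<^sub>m n - v * u') * A"
  have BA: "B = (1\<^sub>m n - P + Q) * A * (1\<^sub>m n + P - Q)"
    unfolding B_def using core_app[OF A Av uA] P_def by simp
  have B: "B \<in> carrier_mat n n" unfolding B_def using A v u' by (auto intro!: minus_carrier_mat)
  have wit: "similar_mat_wit B A (1\<^sub>m n - P + Q) (1\<^sub>m n + P - Q)"
    by (rule similar_mat_witI[OF ST(1,2) BA B A]) (use P Q in \<open>auto intro!: minus_carrier_mat\<close>)
  show "similar_mat B A \<and> (\<forall>k::nat. B ^\<^sub>m k = lam ^ k \<cdot>\<^sub>m (v * u') + (1\<^sub>m n - v * u') * (A ^\<^sub>m k))"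
  proof
    show "similar_mat B A" using wit unfolding similar_mat_def by blast
    show "\<forall>k. B ^\<^sub>m k = lam ^ k \<cdot>\<^sub>m (v * u') + (1\<^sub>m n - v * u') * A ^\<^sub>m k"
    proof
      fix k
      show "B ^\<^sub>m k = lam ^ k \<cdot>\<^sub>m (v * u') + (1\<^sub>m n - v * u') * A ^\<^sub>m k"
        unfolding similar_mat_wit_pow_id[OF wit] using core_app[OF pow_carrier_mat[OF A] Akv uAk] P_def
        by simp
    qed
  qed
qed
end
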